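(* If $E$ is a pseudo effect algebra satisfying (RDP), then its state space $\mathcal S(E)$ is either empty or a nonempty Choquet simplex (with respect to the weak topology).
   Context: Pseudo effect algebra: partial algebra $(E;+,0,1)$ such that for all $a,b,c$: (i) $a+b$ and $(a+b)+c$ exist iff $b+c$ and $a+(b+c)$ exist, and then they are equal; (ii) there is exactly one $d$ and one $e$ with $a+d=e+a=1$; (iii) if $a+b$ exists there are $d,e$ with $a+b=d+a=b+e$; (iv) if $1+a$ or $a+1$ exists then $a=0$. (RDP): whenever $a_1+a_2=b_1+b_2$ there are $d_1,\dots,d_4$ with $d_1+d_2=a_1$, $d_3+d_4=a_2$, $d_1+d_3=b_1$, $d_2+d_4=b_2$. A state is a map $s:E\to[0,\infty)$ with $s(a+b)=s(a)+s(b)$ whenever $a+b$ is defined and $s(1)=1$; $\mathcal S(E)$ is the set of states, a convex subset of $\mathbb R^E$, with the weak topology of pointwise convergence (it is compact Hausdorff). A convex cone $C$ in a real vector space $V$ is strict if $C\cap -C=\{0\}$; it induces the order $x\le_C y$ iff $y-x\in C$; it is a lattice cone if $C$ is a lattice under $\le_C$. A base of $C$ is a convex $K\subseteq C$ such that every nonzero $y\in C$ is uniquely $y=\alpha x$ with $\alpha>0$, $x\in K$. A simplex is a convex set affinely isomorphic to a base of a lattice cone in some real vector space; a Choquet simplex is a compact simplex in a locally convex Hausdorff space. *)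

theory Defs
  imports "HOL-Analysis.Analysis" "HOL-Library.Function_Algebras"
begin

instantiation "fun" :: (type, real_vector) real_vector
begin
definition scaleR_fun :: "real \<Rightarrow> ('a \<Rightarrow> 'b) \<Rightarrow> 'a \<Rightarrow> 'b"
  where "scaleR_fun r f = (\<lambda>x. r *\<^sub>R f x)"
instance
  by standard (auto simp: scaleR_fun_def fun_eq_iff scaleR_add_right scaleR_add_left)
end

text \<open>A pseudo effect algebra on the whole type 'a: partial addition pe
  (None = undefined), zero z and unit u.\<close>

definition pseudo_effect_algebra :: "('a \<Rightarrow> 'a \<Rightarrow> 'a option) \<Rightarrow> 'a \<Rightarrow> 'a \<Rightarrow> bool" where
  "pseudo_effect_algebra pe z u \<longleftrightarrow>
     (\<forall>a b c. Option.bind (pe a b) (\<lambda>ab. pe ab c) = Option.bind (pe b c) (\<lambda>bc. pe a bc)) \<and>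
     (\<forall>a. (\<exists>!d. pe a d = Some u) \<and> (\<exists>!e. pe e a = Some u)) \<and>
     (\<forall>a b x. pe a b = Some x \<longrightarrow> (\<exists>d e. pe d a = Some x \<and> pe b e = Some x)) \<and>
     (\<forall>a. (pe u a \<noteq> None \<or> pe a u \<noteq> None) \<longrightarrow> a = z)"

definition RDP :: "('a \<Rightarrow> 'a \<Rightarrow> 'a option) \<Rightarrow> bool" where
  "RDP pe \<longleftrightarrow>
     (\<forall>a1 a2 b1 b2 x. pe a1 a2 = Some x \<and> pe b1 b2 = Some x \<longrightarrow>
        (\<exists>d1 d2 d3 d4. pe d1 d2 = Some a1 \<and> pe d3 d4 = Some a2 \<and>
                       pe d1 d3 = Some b1 \<and> pe d2 d4 = Some b2))"

definition is_state :: "('a \<Rightarrow> 'a \<Rightarrow> 'a option) \<Rightarrow> 'a \<Rightarrow> ('a \<Rightarrow> real) \<Rightarrow> bool" where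
  "is_state pe u s \<longleftrightarrow>
     (\<forall>a. 0 \<le> s a) \<and> (\<forall>a b x. pe a b = Some x \<longrightarrow> s x = s a + s b) \<and> s u = 1"

definition state_space :: "('a \<Rightarrow> 'a \<Rightarrow> 'a option) \<Rightarrow> 'a \<Rightarrow> ('a \<Rightarrow> real) set" where
  "state_space pe u = {s. is_state pe u s}"

definition cone_le :: "'w::real_vector set \<Rightarrow> 'w \<Rightarrow> 'w \<Rightarrow> bool" where
  "cone_le C x y \<longleftrightarrow> y - x \<in> C"

definition strict_cone :: "'w::real_vector set \<Rightarrow> bool" where
  "strict_cone C \<longleftrightarrow> C \<inter> uminus ` C = {0}"

definition lattice_cone :: "'w::real_vector set \<Rightarrow> bool" where
  "lattice_cone C \<longleftrightarrow> convex_cone C \<and> strict_cone C \<and>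
     (\<forall>x\<in>C. \<forall>y\<in>C.
        (\<exists>s\<in>C. cone_le C x s \<and> cone_le C y s \<and>
               (\<forall>t\<in>C. cone_le C x t \<and> cone_le C y t \<longrightarrow> cone_le C s t)) \<and>
        (\<exists>i\<in>C. cone_le C i x \<and> cone_le C i y \<and>
               (\<forall>t\<in>C. cone_le C t x \<and> cone_le C t y \<longrightarrow> cone_le C t i)))"

definition cone_base :: "'w::real_vector set \<Rightarrow> 'w set \<Rightarrow> bool" where
  "cone_base C K \<longleftrightarrow> convex K \<and> K \<subseteq> C \<and>
     (\<forall>y\<in>C. y \<noteq> 0 \<longrightarrow> (\<exists>!p. 0 < fst p \<and> snd p \<in> K \<and> y = fst p *\<^sub>R snd p))"

definition affine_iso :: "'v::real_vector set \<Rightarrow> 'w::real_vector set \<Rightarrow> ('v \<Rightarrow> 'w) \<Rightarrow> bool" where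
  "affine_iso K K' f \<longleftrightarrow> bij_betw f K K' \<and>
     (\<forall>x\<in>K. \<forall>y\<in>K. \<forall>t\<in>{0..1::real}.
        f (t *\<^sub>R x + (1 - t) *\<^sub>R y) = t *\<^sub>R f x + (1 - t) *\<^sub>R f y)"

definition simplex_in :: "'w::real_vector itself \<Rightarrow> 'v::real_vector set \<Rightarrow> bool" where
  "simplex_in (TYPE('w)) K \<longleftrightarrow> convex K \<and>
     (\<exists>(C::'w set) K' f. lattice_cone C \<and> cone_base C K' \<and> affine_iso K K' f)"

text \<open>Choquet simplex inside the locally convex Hausdorff space of all functions
  'a => real with the product topology (weak topology of pointwise convergence).\<close>
definition choquet_simplex :: "('a \<Rightarrow> real) set \<Rightarrow> bool" where
  "choquet_simplex K \<longleftrightarrow> compact K \<and> simplex_in TYPE(('a \<Rightarrow> real) \<times> real) K"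

end

theory Submission
  imports Defs
begin

definition addpos :: "('a \<Rightarrow> 'a \<Rightarrow> 'a option) \<Rightarrow> ('a \<Rightarrow> real) \<Rightarrow> bool" where
  "addpos pe m \<longleftrightarrow> (\<forall>a. 0 \<le> m a) \<and> (\<forall>a b x. pe a b = Some x \<longrightarrow> m x = m a + m b)"

definition meetf :: "('a \<Rightarrow> 'a \<Rightarrow> 'a option) \<Rightarrow> ('a \<Rightarrow> real) \<Rightarrow> ('a \<Rightarrow> real) \<Rightarrow> 'a \<Rightarrow> real" where
  "meetf pe m1 m2 a = Inf {m1 b + m2 c | b c. pe b c = Some a}"

lemma addposD: "addpos pe m \<Longrightarrow> pe a b = Some x \<Longrightarrow> m x = m a + m b"
  "addpos pe m \<Longrightarrow> 0 \<le> m a"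
  unfolding addpos_def by auto

lemma addpos_diff: "addpos pe m \<Longrightarrow> addpos pe n \<Longrightarrow> (\<And>a. n a \<le> m a) \<Longrightarrow> addpos pe (m - n)"
  unfolding addpos_def by auto

lemma addpos_diff_iff: "addpos pe m \<Longrightarrow> addpos pe n \<Longrightarrow> addpos pe (m - n) \<longleftrightarrow> (\<forall>a. n a \<le> m a)"
  unfolding addpos_def by auto

locale pea =
  fixes pe :: "'a \<Rightarrow> 'a \<Rightarrow> 'a option" and z u :: 'a
  assumes P: "pseudo_effect_algebra pe z u"
begin

lemma A: "Option.bind (pe a b) (\<lambda>ab. pe ab c) = Option.bind (pe b c) (\<lambda>bc. pe a bc)"
  using P unfolding pseudo_effect_algebra_def by blast
lemma B: "(\<exists>!d. pe a d = Some u) \<and> (\<exists>!e. pe e a = Some u)"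
  using P unfolding pseudo_effect_algebra_def by blast
lemma C3: "pe a b = Some x \<Longrightarrow> \<exists>d e. pe d a = Some x \<and> pe b e = Some x"
  using P unfolding pseudo_effect_algebra_def by blast
lemma D: "(pe u a \<noteq> None \<or> pe a u \<noteq> None) \<Longrightarrow> a = z"
  using P unfolding pseudo_effect_algebra_def by blast

lemma assocL: "pe a b = Some y \<Longrightarrow> pe y c = Some x \<Longrightarrow> \<exists>w. pe b c = Some w \<and> pe a w = Some x"
proof -
  assume h: "pe a b = Some y" "pe y c = Some x"
  then have "Option.bind (pe b c) (\<lambda>bc. pe a bc) = Some x" using A[of a b c] by simp
  then show ?thesis by (cases "pe b c") auto
qed

lemma assocR: "pe b c = Some w \<Longrightarrow> pe a w = Some x \<Longrightarrow> \<exists>y. pe a b = Some y \<and> pe y c = Some x"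
proof -
  assume h: "pe b c = Some w" "pe a w = Some x"
  then have "Option.bind (pe a b) (\<lambda>ab. pe ab c) = Some x" using A[of a b c] by simp
  then show ?thesis by (cases "pe a b") auto
qed

lemma zr: "pe a z = Some a"
proof -
  obtain d where "pe u d = Some u" using B by blast
  then have uz: "pe u z = Some u" using D[of d] by auto
  obtain e where e: "pe e a = Some u" using B by blast
  obtain y where y1: "pe a z = Some y" and y2: "pe e y = Some u"
    using assocL[OF e uz] by blast
  have "y = a" using B[of e] y2 e by blast
  then show "pe a z = Some a" using y1 by simp
qed

lemma le_u: "addpos pe m \<Longrightarrow> m a \<le> m u"
proof -
  assume m: "addpos pe m"
  obtain d where "pe a d = Some u" using B by blast
  then show ?thesis using addposD[OF m] by (metis le_add_same_cancel1)
qed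

lemma zero0: "addpos pe m \<Longrightarrow> m z = 0"
  using addposD(1)[of pe m u z u] zr[of u] by simp

lemma meet_le: "addpos pe m1 \<Longrightarrow> addpos pe m2 \<Longrightarrow> pe b c = Some a \<Longrightarrow> meetf pe m1 m2 a \<le> m1 b + m2 c"
  unfolding meetf_def
  apply (rule cInf_lower)
   apply blast
  apply (rule bdd_belowI[of _ 0])
  by (auto intro!: add_nonneg_nonneg simp: addposD(2))

lemma meet_ge: "(\<And>b c. pe b c = Some a \<Longrightarrow> t \<le> m1 b + m2 c) \<Longrightarrow> t \<le> meetf pe m1 m2 a"
  unfolding meetf_def
  apply (rule cInf_greatest)
  using zr by blast+

lemma meet_nonneg: "addpos pe m1 \<Longrightarrow> addpos pe m2 \<Longrightarrow> 0 \<le> meetf pe m1 m2 a"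
  by (rule meet_ge) (simp add: addposD(2) add_nonneg_nonneg)

lemma meet_le1: "addpos pe m1 \<Longrightarrow> addpos pe m2 \<Longrightarrow> meetf pe m1 m2 a \<le> m1 a"
  using meet_le[OF _ _ zr, of m1 m2 a] zero0[of m2] by simp

lemma meet_le2: "addpos pe m1 \<Longrightarrow> addpos pe m2 \<Longrightarrow> meetf pe m1 m2 a \<le> m2 a"
proof -
  assume m: "addpos pe m1" "addpos pe m2"
  have "pe z a = Some a"
  proof -
    obtain e where e: "pe a e = Some u" using B by blast
    obtain d where "pe d u = Some u" using B by blast
    then have zu: "pe z u = Some u" using D[of d] by auto
    obtain y where y1: "pe z a = Some y" and y2: "pe y e = Some u"
      using assocR[OF e zu] by blast
    have "y = a" using B[of e] y2 e by blast
    then show ?thesis using y1 by simp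
  qed
  then show ?thesis using meet_le[OF m, of z a a] zero0[OF m(1)] by simp
qed

end

locale pea_rdp = pea +
  assumes R: "RDP pe"
begin

lemma meet_add:
  assumes m1: "addpos pe m1" and m2: "addpos pe m2" and x: "pe a b = Some x"
  shows "meetf pe m1 m2 x = meetf pe m1 m2 a + meetf pe m1 m2 b"
proof (rule antisym)
  have key: "meetf pe m1 m2 x \<le> m1 a1 + m2 a2 + (m1 b1 + m2 b2)"
    if ha: "pe a1 a2 = Some a" and hb: "pe b1 b2 = Some b" for a1 a2 b1 b2
  proof -
    obtain w where w1: "pe a2 b = Some w" and w2: "pe a1 w = Some x" using assocL[OF ha x] by blast
    obtain v where v1: "pe a2 b1 = Some v" and v2: "pe v b2 = Some w" using assocR[OF hb w1] by blast
    obtain d where d: "pe d a2 = Some v" using C3[OF v1] by blast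
    obtain q where q1: "pe a2 b2 = Some q" and q2: "pe d q = Some w" using assocL[OF d v2] by blast
    obtain p where p1: "pe a1 d = Some p" and p2: "pe p q = Some x" using assocR[OF q2 w2] by blast
    have "m1 d = m1 b1" using addposD(1)[OF m1 d] addposD(1)[OF m1 v1] by simp
    then show ?thesis
      using meet_le[OF m1 m2 p2] addposD(1)[OF m1 p1] addposD(1)[OF m2 q1] by simp
  qed
  have "meetf pe m1 m2 x - (m1 b1 + m2 b2) \<le> meetf pe m1 m2 a" if hb: "pe b1 b2 = Some b" for b1 b2
    by (rule meet_ge) (use key[OF _ hb] in force)
  then have "meetf pe m1 m2 x - meetf pe m1 m2 a \<le> meetf pe m1 m2 b"
    by (intro meet_ge) force
  then show "meetf pe m1 m2 x \<le> meetf pe m1 m2 a + meetf pe m1 m2 b" by simp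
next
  show "meetf pe m1 m2 a + meetf pe m1 m2 b \<le> meetf pe m1 m2 x"
  proof (rule meet_ge)
    fix p q assume pq: "pe p q = Some x"
    obtain d1 d2 d3 d4 where d: "pe d1 d2 = Some p" "pe d3 d4 = Some q"
       "pe d1 d3 = Some a" "pe d2 d4 = Some b"
      using R pq x unfolding RDP_def by blast
    show "meetf pe m1 m2 a + meetf pe m1 m2 b \<le> m1 p + m2 q"
      using meet_le[OF m1 m2 d(3)] meet_le[OF m1 m2 d(4)]
        addposD(1)[OF m1 d(1)] addposD(1)[OF m2 d(2)] by simp
  qed
qed

lemma meet_addpos: "addpos pe m1 \<Longrightarrow> addpos pe m2 \<Longrightarrow> addpos pe (meetf pe m1 m2)"
  unfolding addpos_def[of pe "meetf pe m1 m2"] using meet_nonneg meet_add by blast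

end

context pea_rdp begin
lemma addpos_add: "addpos pe m \<Longrightarrow> addpos pe n \<Longrightarrow> addpos pe (m + n)"
  unfolding addpos_def by (auto intro: add_nonneg_nonneg)

definition "CC = {p :: ('a \<Rightarrow> real) \<times> real. snd p = 0 \<and> addpos pe (fst p)}"

lemma cone_le_CC: "p \<in> CC \<Longrightarrow> q \<in> CC \<Longrightarrow> cone_le CC p q \<longleftrightarrow> addpos pe (fst q - fst p)"
  unfolding cone_le_def CC_def by auto

lemma lattice_CC: "lattice_cone CC"
  unfolding lattice_cone_def
proof (intro conjI ballI)
  show "convex_cone CC"
    unfolding convex_cone_iff CC_def
    by (auto simp: addpos_def scaleR_fun_def zero_prod_def distrib_left intro: add_nonneg_nonneg)
  show "strict_cone CC"
    unfolding strict_cone_def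
  proof (intro equalityI subsetI)
    fix p assume "p \<in> CC \<inter> uminus ` CC"
    then obtain q where p: "p \<in> CC" "q \<in> CC" "p = - q" by auto
    then have "fst p a = 0" for a
      using addposD(2)[of pe "fst p" a] addposD(2)[of pe "fst q" a] by (auto simp: CC_def)
    then show "p \<in> {0}" using p by (auto simp: CC_def prod_eq_iff fun_eq_iff)
  next
    fix p :: "('a \<Rightarrow> real) \<times> real" assume "p \<in> {0}"
    moreover have "(0::('a \<Rightarrow> real) \<times> real) \<in> CC" by (simp add: CC_def addpos_def)
    ultimately show "p \<in> CC \<inter> uminus ` CC" by (auto intro: image_eqI[of _ _ 0])
  qed
next
  fix x y assume x: "x \<in> CC" and y: "y \<in> CC"
  define m1 where "m1 = fst x"
  define m2 where "m2 = fst y"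
  have m1: "addpos pe m1" and m2: "addpos pe m2" using x y by (auto simp: CC_def m1_def m2_def)
  define i where "i = meetf pe m1 m2"
  have i: "addpos pe i" unfolding i_def by (rule meet_addpos[OF m1 m2])
  have i1: "addpos pe (m1 - i)" by (rule addpos_diff[OF m1 i]) (simp add: i_def meet_le1[OF m1 m2])
  have i2: "addpos pe (m2 - i)" by (rule addpos_diff[OF m2 i]) (simp add: i_def meet_le2[OF m1 m2])
  have iC: "(i, 0) \<in> CC" using i by (simp add: CC_def)
  have sC: "(m1 + m2 - i, 0) \<in> CC"
  proof -
    have "m1 + m2 - i = m2 + (m1 - i)" by (simp add: algebra_simps)
    then show ?thesis using addpos_add[OF m2 i1] by (simp only: CC_def) simp
  qed
  show "\<exists>s\<in>CC. cone_le CC x s \<and> cone_le CC y s \<and>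
               (\<forall>t\<in>CC. cone_le CC x t \<and> cone_le CC y t \<longrightarrow> cone_le CC s t)"
  proof (intro bexI[OF _ sC] conjI ballI impI)
    show "cone_le CC x (m1 + m2 - i, 0)"
      using cone_le_CC[OF x sC] i2 by (simp add: m1_def[symmetric] algebra_simps)
    show "cone_le CC y (m1 + m2 - i, 0)"
      using cone_le_CC[OF y sC] i1 by (simp add: m2_def[symmetric] algebra_simps)
    fix t assume t: "t \<in> CC" and "cone_le CC x t \<and> cone_le CC y t"
    then have t1: "addpos pe (fst t - m1)" and t2: "addpos pe (fst t - m2)"
      using cone_le_CC[OF x t] cone_le_CC[OF y t] by (auto simp: m1_def m2_def)
    have T: "addpos pe (fst t)" using t by (simp add: CC_def)
    have le: "m1 a + m2 a - fst t a \<le> i a" for a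
      unfolding i_def
    proof (rule meet_ge)
      fix b c assume bc: "pe b c = Some a"
      have "fst t c \<ge> m1 c" "fst t b \<ge> m2 b"
        using addposD(2)[OF t1, of c] addposD(2)[OF t2, of b] by auto
      then show "m1 a + m2 a - fst t a \<le> m1 b + m2 c"
        using addposD(1)[OF T bc] addposD(1)[OF m1 bc] addposD(1)[OF m2 bc] by simp
    qed
    have "addpos pe (fst t - (m1 + m2 - i))"
      by (rule addpos_diff[OF T]) (use sC le in \<open>auto simp: CC_def\<close>, smt (verit) le)
    then show "cone_le CC (m1 + m2 - i, 0) t" using cone_le_CC[OF sC t] by simp
  qed
  show "\<exists>s\<in>CC. cone_le CC s x \<and> cone_le CC s y \<and>
               (\<forall>t\<in>CC. cone_le CC t x \<and> cone_le CC t y \<longrightarrow> cone_le CC t s)"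
  proof (intro bexI[OF _ iC] conjI ballI impI)
    show "cone_le CC (i, 0) x" using cone_le_CC[OF iC x] i1 by (simp add: m1_def)
    show "cone_le CC (i, 0) y" using cone_le_CC[OF iC y] i2 by (simp add: m2_def)
    fix t assume t: "t \<in> CC" and "cone_le CC t x \<and> cone_le CC t y"
    then have t1: "addpos pe (m1 - fst t)" and t2: "addpos pe (m2 - fst t)"
      using cone_le_CC[OF t x] cone_le_CC[OF t y] by (auto simp: m1_def m2_def)
    have T: "addpos pe (fst t)" using t by (simp add: CC_def)
    have le: "fst t a \<le> i a" for a
      unfolding i_def
    proof (rule meet_ge)
      fix b c assume bc: "pe b c = Some a"
      have "fst t b \<le> m1 b" "fst t c \<le> m2 c"
        using addposD(2)[OF t1, of b] addposD(2)[OF t2, of c] by auto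
      then show "fst t a \<le> m1 b + m2 c"
        using addposD(1)[OF T bc] by simp
    qed
    have "addpos pe (i - fst t)" by (rule addpos_diff[OF i T le])
    then show "cone_le CC t (i, 0)" using cone_le_CC[OF t iC] by simp
  qed
qed

lemma state_iff: "is_state pe u s \<longleftrightarrow> addpos pe s \<and> s u = 1"
  unfolding is_state_def addpos_def by auto

lemma convex_S: "convex (state_space pe u)"
  unfolding convex_def state_space_def state_iff addpos_def
  by (auto simp: scaleR_fun_def intro!: add_nonneg_nonneg) (simp add: algebra_simps)

lemma compact_S: "compact (state_space pe u)"
proof -
  have sub: "state_space pe u \<subseteq> PiE UNIV (\<lambda>_. {0..1::real})"
    using le_u by (auto simp: state_space_def state_iff addposD(2)) (metis le_u)
  have cB: "compact (PiE UNIV (\<lambda>_. {0..1::real}))"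
    using compactin_PiE[of "\<lambda>_. euclidean" UNIV "\<lambda>_. {0..1::real}"]
    by (simp add: euclidean_product_topology)
  have eq: "state_space pe u = (\<Inter>a. {s. 0 \<le> s a}) \<inter>
     (\<Inter>abx\<in>{(a,b,x). pe a b = Some x}. {s. s (snd (snd abx)) = s (fst abx) + s (fst (snd abx))})
     \<inter> {s. s u = 1}"
    by (auto simp: state_space_def is_state_def)
  have "closed (state_space pe u)"
    unfolding eq
    by (intro closed_Int closed_INT ballI closed_Collect_le closed_Collect_eq continuous_intros
        continuous_on_product_coordinates)
  then show ?thesis using cB sub by (metis compact_Int_closed inf.absorb_iff2)
qed

lemma base: "cone_base CC (state_space pe u \<times> {0})"
  unfolding cone_base_def
proof (intro conjI ballI impI)
  show "convex (state_space pe u \<times> {0::real})" by (intro convex_Times convex_S) auto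
  show "state_space pe u \<times> {0} \<subseteq> CC" by (auto simp: CC_def state_space_def state_iff)
  fix y assume y: "y \<in> CC" "y \<noteq> 0"
  define m where "m = fst y"
  have m: "addpos pe m" and y0: "y = (m, 0)" using y by (auto simp: CC_def m_def prod_eq_iff)
  have "m \<noteq> 0" using y y0 by (auto simp: zero_prod_def)
  have mu: "0 < m u"
  proof (rule ccontr)
    assume "\<not> 0 < m u"
    then have "m a = 0" for a using le_u[OF m, of a] addposD(2)[OF m, of a] by simp
    then show False using \<open>m \<noteq> 0\<close> by auto
  qed
  define s where "s = inverse (m u) *\<^sub>R m"
  have s: "s \<in> state_space pe u"
    unfolding state_space_def state_iff s_def using m mu
    by (auto simp: addpos_def scaleR_fun_def algebra_simps)
  have ys: "y = m u *\<^sub>R (s, 0)" using mu by (simp add: y0 s_def)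
  show "\<exists>!p. 0 < fst p \<and> snd p \<in> state_space pe u \<times> {0} \<and> y = fst p *\<^sub>R snd p"
  proof (rule ex1I[of _ "(m u, (s, 0))"])
    show "0 < fst (m u, s, 0::real) \<and> snd (m u, s, 0::real) \<in> state_space pe u \<times> {0} \<and> y = fst (m u, s, 0::real) *\<^sub>R snd (m u, s, 0::real)"
      using mu s ys by simp
    fix p assume p: "0 < fst p \<and> snd p \<in> state_space pe u \<times> {0} \<and> y = fst p *\<^sub>R snd p"
    obtain \<alpha> s' where p': "p = (\<alpha>, (s', 0))" and s': "s' \<in> state_space pe u" and a: "0 < \<alpha>"
      using p by (cases p) auto
    have ms: "m = \<alpha> *\<^sub>R s'" using p p' y0 by simp
    have "m u = \<alpha>" using s' ms by (simp add: state_space_def state_iff scaleR_fun_def)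
    then have "s' = s" using ms a by (simp add: s_def)
    then show "p = (m u, s, 0)" using p' \<open>m u = \<alpha>\<close> by simp
  qed
qed

lemma simplex: "choquet_simplex (state_space pe u)"
  unfolding choquet_simplex_def simplex_in_def
proof (intro conjI compact_S convex_S exI)
  show "lattice_cone CC" by (rule lattice_CC)
  show "cone_base CC (state_space pe u \<times> {0})" by (rule base)
  show "affine_iso (state_space pe u) (state_space pe u \<times> {0}) (\<lambda>s. (s, 0::real))"
    unfolding affine_iso_def by (auto simp: bij_betw_def inj_on_def)
qed

end

theorem theorem5p1:
  fixes pe :: "'a \<Rightarrow> 'a \<Rightarrow> 'a option" and z u :: 'a
  assumes "pseudo_effect_algebra pe z u"
    and "RDP pe"
  shows "state_space pe u = {} \<or>
         (state_space pe u \<noteq> {} \<and> choquet_simplex (state_space pe u))"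
proof -
  interpret pea_rdp pe z u by unfold_locales (use assms in auto)
  show ?thesis using simplex by blast
qed

end
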